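(* Let $I$ be a nonzero proper monomial ideal of $R=K[x_1,\ldots,x_d]$ ($K$ a field), and write $NP(I)=\{\mathbf{x}\in\mathbb{R}^d_+\mid \mathbf{a}_i\cdot\mathbf{x}\ge c_i,\ 1\le i\le s\}$ with $\mathbf{a}_i=(a_{i1},\ldots,a_{id})\in\mathbb{N}^d$, $c_i\in\mathbb{N}$, each inequality defining a facet of $NP(I)$. Then: (1) All jumping numbers for $I$ are rational. (2) For each $r\in\mathbb{R}_+$ there exists $r'\in\mathbb{Q}$ with $\overline{I^r}=\overline{I^{r'}}$; moreover $r'$ can be taken to be a jumping number for $I$. (3) If $r$ is a jumping number for $I$, then $nr$ is a jumping number for $I$ for all $n\in\mathbb{N}$. (4) If $\mathbf{v}=(v_1,\ldots,v_d)$ is a vertex of $NP(I)$, then for all $n\in\mathbb{N}$ the number $r_n=\frac{n}{\gcd(v_1,\ldots,v_d)}$ is a jumping number for $I$. (5) For each $i$ with $c_i\neq0$ let $S_i=\{rc_i \mid r\in\mathbb{R}_+ \text{ and there exists } \mathbf{x}\in\mathbb{N}^d \text{ with } \mathbf{a}_i\cdot\mathbf{x}=rc_i \text{ and } \mathbf{a}_l\cdot\mathbf{x}\ge rc_l \text{ for all } l\neq i\}$. Then each $S_i$ is a submonoid of the additive monoid generated by $a_{i1},\ldots,a_{id}$, and the set $\mathcal{J}$ of jumping numbers for $I$ equals $\bigcup_{c_i\neq0}\frac{1}{c_i}S_i$.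
   Context: $\mathbb{R}_+$ denotes the non-negative reals, $\mathbb{N}$ the non-negative integers, and $\mathbf{x}^{\mathbf{a}}=x_1^{a_1}\cdots x_d^{a_d}$. $NP(I)$ is the convex hull in $\mathbb{R}^d$ of $\{\mathbf{a}\in\mathbb{N}^d\mid \mathbf{x}^{\mathbf{a}}\in I\}$. For real $t\ge0$, the $t$-th real power of $I$ is $\overline{I^t}=(\{\mathbf{x}^{\mathbf{a}}\mid \mathbf{a}\in t\cdot NP(I)\cap\mathbb{N}^d\})$, where $t\cdot NP(I)=\{\mathbf{x}\in\mathbb{R}^d_+\mid \mathbf{a}_i\cdot\mathbf{x}\ge tc_i,\ 1\le i\le s\}$. For $r\ge0$, $\overline{I^{>r}}=\bigcup_{t>r}\overline{I^t}$. A jumping number for $I$ is a real $r\ge0$ with $\overline{I^r}\neq\overline{I^{>r}}$. *)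

theory Defs
  imports "HOL-Analysis.Analysis"
begin

text \<open>Monomials x^a of K[x_1..x_d] are identified with their exponent vectors,
  which we regard as points of real^'n with natural-number coordinates
  (the index type 'n stands for {1..d}). A monomial ideal is identified with
  the set of exponent vectors of the monomials it contains.\<close>

definition lat :: "(real^'n) set" where
  "lat = {x. \<forall>j. x $ j \<in> \<nat>}"

definition mono_ideal :: "(real^'n) set \<Rightarrow> (real^'n) set" where
  "mono_ideal G = {b \<in> lat. \<exists>a\<in>G. \<forall>j. a $ j \<le> b $ j}"

definition monomial_ideal :: "(real^'n) set \<Rightarrow> bool" where
  "monomial_ideal E \<longleftrightarrow> E \<subseteq> lat \<and>
     (\<forall>a\<in>E. \<forall>b\<in>lat. (\<forall>j. a $ j \<le> b $ j) \<longrightarrow> b \<in> E)"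

definition NP :: "(real^'n) set \<Rightarrow> (real^'n) set" where
  "NP E = convex hull E"

text \<open>t * NP(I) defined via the (facet) inequalities a i . x >= t c i, i < s.\<close>
definition tNP :: "(nat \<Rightarrow> real^'n) \<Rightarrow> (nat \<Rightarrow> real) \<Rightarrow> nat \<Rightarrow> real \<Rightarrow> (real^'n) set" where
  "tNP a c s t = {x. (\<forall>j. 0 \<le> x $ j) \<and> (\<forall>i<s. a i \<bullet> x \<ge> t * c i)}"

definition real_pow :: "(nat \<Rightarrow> real^'n) \<Rightarrow> (nat \<Rightarrow> real) \<Rightarrow> nat \<Rightarrow> real \<Rightarrow> (real^'n) set" where
  "real_pow a c s t = mono_ideal (tNP a c s t \<inter> lat)"

definition real_pow_gt :: "(nat \<Rightarrow> real^'n) \<Rightarrow> (nat \<Rightarrow> real) \<Rightarrow> nat \<Rightarrow> real \<Rightarrow> (real^'n) set" where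
  "real_pow_gt a c s r = (\<Union>t\<in>{r<..}. real_pow a c s t)"

definition jumping_number :: "(nat \<Rightarrow> real^'n) \<Rightarrow> (nat \<Rightarrow> real) \<Rightarrow> nat \<Rightarrow> real \<Rightarrow> bool" where
  "jumping_number a c s r \<longleftrightarrow> r \<ge> 0 \<and> real_pow a c s r \<noteq> real_pow_gt a c s r"

definition vgcd :: "real^'n \<Rightarrow> nat" where
  "vgcd v = Gcd ((\<lambda>j. nat \<lfloor>v $ j\<rfloor>) ` UNIV)"

definition S_set :: "(nat \<Rightarrow> real^'n) \<Rightarrow> (nat \<Rightarrow> real) \<Rightarrow> nat \<Rightarrow> nat \<Rightarrow> real set" where
  "S_set a c s i = {r * c i | r. r \<ge> 0 \<and> (\<exists>x\<in>lat. a i \<bullet> x = r * c i \<and>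
        (\<forall>l<s. l \<noteq> i \<longrightarrow> a l \<bullet> x \<ge> r * c l))}"

definition gen_monoid :: "real^'n \<Rightarrow> real set" where
  "gen_monoid w = {\<Sum>j\<in>UNIV. real (k j) * w $ j | k. True}"

definition submonoid_of :: "real set \<Rightarrow> real set \<Rightarrow> bool" where
  "submonoid_of S M \<longleftrightarrow> S \<subseteq> M \<and> 0 \<in> S \<and> (\<forall>x\<in>S. \<forall>y\<in>S. x + y \<in> S)"

end

theory Submission
  imports Defs
begin

lemma sum_Nats: "finite A \<Longrightarrow> (\<And>x. x \<in> A \<Longrightarrow> f x \<in> \<nat>) \<Longrightarrow> sum f A \<in> (\<nat>::real set)"
  by (induction A rule: finite_induct) auto

lemma prod_Nats: "finite A \<Longrightarrow> (\<And>x. x \<in> A \<Longrightarrow> f x \<in> \<nat>) \<Longrightarrow> prod f A \<in> (\<nat>::real set)"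
  by (induction A rule: finite_induct) auto

lemma Nats_nonneg: "x \<in> \<nat> \<Longrightarrow> (0::real) \<le> x"
  by (auto elim: Nats_cases)

lemma lat_nonneg: "x \<in> lat \<Longrightarrow> 0 \<le> x $ j"
  unfolding lat_def using Nats_nonneg by blast

lemma inner_lat_Nats: "x \<in> lat \<Longrightarrow> y \<in> lat \<Longrightarrow> x \<bullet> y \<in> \<nat>"
  unfolding inner_vec_def lat_def by (intro sum_Nats) auto

lemma inner_nonneg_lat: "a \<in> lat \<Longrightarrow> (\<And>j. 0 \<le> x $ j) \<Longrightarrow> 0 \<le> a \<bullet> x"
  unfolding inner_vec_def by (intro sum_nonneg) (simp add: lat_nonneg)

lemma inner_mono_lat: "a \<in> lat \<Longrightarrow> (\<And>j. x $ j \<le> y $ j) \<Longrightarrow> a \<bullet> x \<le> a \<bullet> y"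
  unfolding inner_vec_def by (intro sum_mono) (simp add: lat_nonneg mult_left_mono)

lemma lat_inner_nonneg: "a \<in> lat \<Longrightarrow> x \<in> lat \<Longrightarrow> 0 \<le> a \<bullet> x"
  using inner_nonneg_lat lat_nonneg by blast

lemma lat_nat_floor: "x \<in> lat \<Longrightarrow> real (nat \<lfloor>x $ j\<rfloor>) = x $ j"
proof -
  assume "x \<in> lat"
  then have "x $ j \<in> \<nat>" unfolding lat_def by blast
  then obtain m where "x $ j = real m" by (auto elim!: Nats_cases)
  then show ?thesis by simp
qed

lemma lat_add: "x \<in> lat \<Longrightarrow> y \<in> lat \<Longrightarrow> x + y \<in> lat"
  unfolding lat_def by auto

lemma lat_scale: "x \<in> lat \<Longrightarrow> real n *\<^sub>R x \<in> lat"
  unfolding lat_def by auto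

lemma lat_zero: "0 \<in> lat"
  unfolding lat_def by auto

context
  fixes a :: "nat \<Rightarrow> real^'n" and c :: "nat \<Rightarrow> real" and s :: nat
  assumes a_nat: "\<forall>i<s. a i \<in> lat"
    and c_nat: "\<forall>i<s. c i \<in> \<nat>"
begin

lemma c_nonneg: "i < s \<Longrightarrow> 0 \<le> c i"
  using c_nat Nats_nonneg by blast

lemma tNP_lat: "x \<in> lat \<Longrightarrow> x \<in> tNP a c s t \<longleftrightarrow> (\<forall>i<s. t * c i \<le> a i \<bullet> x)"
  unfolding tNP_def using lat_nonneg by auto

lemma rp_eq: "real_pow a c s t = tNP a c s t \<inter> lat"
proof
  show "real_pow a c s t \<subseteq> tNP a c s t \<inter> lat"
  proof
    fix b assume "b \<in> real_pow a c s t"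
    then obtain x where b: "b \<in> lat" and x: "x \<in> tNP a c s t" "x \<in> lat" and le: "\<forall>j. x $ j \<le> b $ j"
      unfolding real_pow_def mono_ideal_def by auto
    have "\<forall>i<s. t * c i \<le> a i \<bullet> b"
    proof (intro allI impI)
      fix i assume i: "i < s"
      have "t * c i \<le> a i \<bullet> x" using x i tNP_lat by auto
      also have "\<dots> \<le> a i \<bullet> b" using inner_mono_lat a_nat i le by auto
      finally show "t * c i \<le> a i \<bullet> b" .
    qed
    then show "b \<in> tNP a c s t \<inter> lat" using b tNP_lat by auto
  qed
next
  show "tNP a c s t \<inter> lat \<subseteq> real_pow a c s t"
    unfolding real_pow_def mono_ideal_def by auto
qed

definition "PP = {i. i < s \<and> c i \<noteq> 0}"
definition "mm x = Min ((\<lambda>i. (a i \<bullet> x) / c i) ` PP)"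

lemma PP_fin: "finite PP" unfolding PP_def by auto

lemma PP_pos: "i \<in> PP \<Longrightarrow> 0 < c i"
  unfolding PP_def using c_nonneg by force

lemma mm_ge: "PP \<noteq> {} \<Longrightarrow> t \<le> mm x \<longleftrightarrow> (\<forall>i\<in>PP. t * c i \<le> a i \<bullet> x)"
  unfolding mm_def using PP_fin PP_pos by (simp add: Min_ge_iff pos_le_divide_eq)

lemma mm_gt: "PP \<noteq> {} \<Longrightarrow> t < mm x \<longleftrightarrow> (\<forall>i\<in>PP. t * c i < a i \<bullet> x)"
  unfolding mm_def using PP_fin PP_pos by (simp add: Min_gr_iff pos_less_divide_eq)

lemma mm_in: "PP \<noteq> {} \<Longrightarrow> \<exists>i\<in>PP. a i \<bullet> x = mm x * c i"
proof -
  assume ne: "PP \<noteq> {}"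
  have "mm x \<in> (\<lambda>i. (a i \<bullet> x) / c i) ` PP" unfolding mm_def using PP_fin ne by (intro Min_in) auto
  then obtain i where "i \<in> PP" "mm x = (a i \<bullet> x) / c i" by auto
  then show ?thesis using PP_pos[of i] by (intro bexI[of _ i]) auto
qed

lemma tNP_iff_mm: "PP \<noteq> {} \<Longrightarrow> x \<in> lat \<Longrightarrow> x \<in> tNP a c s t \<longleftrightarrow> t \<le> mm x"
proof -
  assume ne: "PP \<noteq> {}" and x: "x \<in> lat"
  have "\<forall>i<s. i \<notin> PP \<longrightarrow> t * c i \<le> a i \<bullet> x"
    using a_nat x lat_inner_nonneg unfolding PP_def by auto
  then show ?thesis using tNP_lat[OF x] mm_ge[OF ne] unfolding PP_def by auto
qed

lemma J_iff: "jumping_number a c s r \<longleftrightarrow> r \<ge> 0 \<and>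
   (\<exists>x\<in>lat. \<exists>i\<in>PP. a i \<bullet> x = r * c i \<and> (\<forall>l<s. r * c l \<le> a l \<bullet> x))"
proof
  assume J: "jumping_number a c s r"
  then have r0: "r \<ge> 0" unfolding jumping_number_def by auto
  have sub: "real_pow_gt a c s r \<subseteq> real_pow a c s r"
  proof
    fix x assume "x \<in> real_pow_gt a c s r"
    then obtain t where t: "t > r" "x \<in> tNP a c s t" "x \<in> lat"
      unfolding real_pow_gt_def rp_eq by auto
    have "\<forall>i<s. r * c i \<le> a i \<bullet> x"
    proof (intro allI impI)
      fix i assume i: "i < s"
      have "r * c i \<le> t * c i" using t c_nonneg[OF i] by (simp add: mult_right_mono)
      also have "\<dots> \<le> a i \<bullet> x" using t i tNP_lat by auto
      finally show "r * c i \<le> a i \<bullet> x" .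
    qed
    then show "x \<in> real_pow a c s r" using t tNP_lat rp_eq by auto
  qed
  then obtain x where x: "x \<in> real_pow a c s r" "x \<notin> real_pow_gt a c s r"
    using J unfolding jumping_number_def by auto
  have xl: "x \<in> lat" and xr: "\<forall>l<s. r * c l \<le> a l \<bullet> x" using x(1) rp_eq tNP_lat by auto
  have nt: "\<And>t. t > r \<Longrightarrow> x \<notin> tNP a c s t"
    using x(2) xl unfolding real_pow_gt_def rp_eq by auto
  show "r \<ge> 0 \<and> (\<exists>x\<in>lat. \<exists>i\<in>PP. a i \<bullet> x = r * c i \<and> (\<forall>l<s. r * c l \<le> a l \<bullet> x))"
  proof (rule ccontr)
    assume "\<not> ?thesis"
    then have strict: "\<forall>i\<in>PP. r * c i < a i \<bullet> x" using r0 xl xr unfolding PP_def by force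
    show False
    proof (cases "PP = {}")
      case True
      have "x \<in> tNP a c s (r+1)" using True xl tNP_lat a_nat lat_inner_nonneg[of _ x]
        unfolding PP_def by auto
      then show False using nt[of "r+1"] by auto
    next
      case False
      have "r < mm x" using mm_gt[OF False] strict by auto
      moreover have "x \<in> tNP a c s (mm x)" using tNP_iff_mm[OF False xl] by auto
      ultimately show False using nt by auto
    qed
  qed
next
  assume "r \<ge> 0 \<and> (\<exists>x\<in>lat. \<exists>i\<in>PP. a i \<bullet> x = r * c i \<and> (\<forall>l<s. r * c l \<le> a l \<bullet> x))"
  then obtain x i where r0: "r \<ge> 0" and x: "x \<in> lat" "i \<in> PP" "a i \<bullet> x = r * c i"
    "\<forall>l<s. r * c l \<le> a l \<bullet> x" by auto
  have "x \<in> real_pow a c s r" using x rp_eq tNP_lat by auto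
  moreover have "x \<notin> real_pow_gt a c s r"
  proof
    assume "x \<in> real_pow_gt a c s r"
    then obtain t where t: "t > r" "x \<in> tNP a c s t" unfolding real_pow_gt_def rp_eq by auto
    have "t * c i \<le> a i \<bullet> x" using t x tNP_lat unfolding PP_def by auto
    moreover have "r * c i < t * c i" using t PP_pos[OF x(2)] by auto
    ultimately show False using x by auto
  qed
  ultimately show "jumping_number a c s r" using r0 unfolding jumping_number_def by auto
qed

lemma mm_J: "PP \<noteq> {} \<Longrightarrow> x \<in> lat \<Longrightarrow> jumping_number a c s (mm x)"
proof -
  assume ne: "PP \<noteq> {}" and x: "x \<in> lat"
  obtain i where i: "i \<in> PP" "a i \<bullet> x = mm x * c i" using mm_in[OF ne] by auto
  have "x \<in> tNP a c s (mm x)" using tNP_iff_mm[OF ne x] by auto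
  then have all: "\<forall>l<s. mm x * c l \<le> a l \<bullet> x" using tNP_lat[OF x] by auto
  have "0 \<le> a i \<bullet> x" using i a_nat x lat_inner_nonneg[of "a i" x] unfolding PP_def by auto
  then have "0 \<le> mm x * c i" using i by simp
  then have "0 \<le> mm x" using PP_pos[OF i(1)] by (simp add: zero_le_mult_iff)
  then show ?thesis unfolding J_iff using x i all by auto
qed

end

theorem theorem5p9:
  fixes E :: "(real^'n) set" and a :: "nat \<Rightarrow> real^'n" and c :: "nat \<Rightarrow> real" and s :: nat
  assumes mono: "monomial_ideal E"
    and nonzero: "E \<noteq> {}"
    and proper: "0 \<notin> E"
    and a_nat: "\<forall>i<s. a i \<in> lat"
    and c_nat: "\<forall>i<s. c i \<in> \<nat>"
    and NP_eq: "NP E = {x. (\<forall>j. 0 \<le> x $ j) \<and> (\<forall>i<s. a i \<bullet> x \<ge> c i)}"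
    and facets: "\<forall>i<s. (NP E \<inter> {x. a i \<bullet> x = c i}) facet_of NP E"
  shows "(\<forall>r. jumping_number a c s r \<longrightarrow> r \<in> \<rat>)
    \<and> (\<forall>r\<ge>0. \<exists>r'. r' \<in> \<rat> \<and> real_pow a c s r = real_pow a c s r' \<and> jumping_number a c s r')
    \<and> (\<forall>r. jumping_number a c s r \<longrightarrow> (\<forall>n::nat. jumping_number a c s (real n * r)))
    \<and> (\<forall>v. v extreme_point_of NP E \<longrightarrow>
          (\<forall>n::nat. jumping_number a c s (real n / real (vgcd v))))
    \<and> (\<forall>i<s. c i \<noteq> 0 \<longrightarrow> submonoid_of (S_set a c s i) (gen_monoid (a i)))
    \<and> {r. jumping_number a c s r} =
        (\<Union>i\<in>{i. i < s \<and> c i \<noteq> 0}. (\<lambda>y. y / c i) ` S_set a c s i)"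
proof -
  note JI = J_iff[OF a_nat c_nat]
  have PPd: "PP c s = {i. i < s \<and> c i \<noteq> 0}" using PP_def[OF a_nat c_nat] .
  have Elat: "E \<subseteq> lat" using mono unfolding monomial_ideal_def by auto
  have ENP: "E \<subseteq> NP E" unfolding NP_def by (rule hull_subset)
  have NPmem: "\<And>x. x \<in> NP E \<longleftrightarrow> (\<forall>j. 0 \<le> x $ j) \<and> (\<forall>i<s. c i \<le> a i \<bullet> x)"
    using NP_eq by auto
  have PPne: "PP c s \<noteq> {}"
  proof
    assume e: "PP c s = {}"
    have "0 \<in> NP E" unfolding NPmem using e PPd by auto
    moreover have "NP E \<subseteq> {x. 1 \<le> ((\<chi> j. 1) :: real^'n) \<bullet> x}"
      unfolding NP_def
    proof (rule hull_minimal)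
      show "convex {x. 1 \<le> ((\<chi> j. 1) :: real^'n) \<bullet> x}" by (rule convex_halfspace_ge)
      show "E \<subseteq> {x. 1 \<le> ((\<chi> j. 1) :: real^'n) \<bullet> x}"
      proof
        fix x assume xE: "x \<in> E"
        then have xl: "x \<in> lat" using Elat by auto
        have "x \<noteq> 0" using xE proper by auto
        then obtain j where j: "x $ j \<noteq> 0" by (metis vec_eq_iff zero_index)
        have "x $ j \<in> \<nat>" using xl unfolding lat_def by auto
        then have "1 \<le> x $ j" using j by (auto elim!: Nats_cases)
        also have "\<dots> \<le> (\<Sum>k\<in>UNIV. x $ k)"
          by (rule member_le_sum) (auto simp: lat_nonneg[OF xl])
        also have "\<dots> = ((\<chi> j. 1) :: real^'n) \<bullet> x" unfolding inner_vec_def by simp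
        finally show "x \<in> {x. 1 \<le> ((\<chi> j. 1) :: real^'n) \<bullet> x}" by simp
      qed
    qed
    ultimately show False by auto
  qed
  have P1: "\<forall>r. jumping_number a c s r \<longrightarrow> r \<in> \<rat>"
  proof (intro allI impI)
    fix r assume "jumping_number a c s r"
    then obtain x i where x: "x \<in> lat" "i \<in> PP c s" "a i \<bullet> x = r * c i" unfolding JI by auto
    have ci: "c i \<noteq> 0" "i < s" using x(2) PPd by auto
    have "r = (a i \<bullet> x) / c i" using x ci by auto
    moreover have "a i \<bullet> x \<in> \<rat>" using inner_lat_Nats[of "a i" x] a_nat ci x Nats_subset_Rats by auto
    moreover have "c i \<in> \<rat>" using c_nat ci Nats_subset_Rats by auto
    ultimately show "r \<in> \<rat>" by (simp add: Rats_divide)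
  qed
  have P3: "\<forall>r. jumping_number a c s r \<longrightarrow> (\<forall>n::nat. jumping_number a c s (real n * r))"
  proof (intro allI impI)
    fix r and n :: nat assume "jumping_number a c s r"
    then obtain x i where x: "r \<ge> 0" "x \<in> lat" "i \<in> PP c s" "a i \<bullet> x = r * c i"
      "\<forall>l<s. r * c l \<le> a l \<bullet> x" unfolding JI by auto
    have "\<forall>l<s. real n * r * c l \<le> a l \<bullet> (real n *\<^sub>R x)"
      using x(5) by (simp add: mult_left_mono mult.assoc)
    moreover have "a i \<bullet> (real n *\<^sub>R x) = real n * r * c i" using x(4) by simp
    moreover have "real n *\<^sub>R x \<in> lat" using lat_scale[OF x(2)] .
    moreover have "0 \<le> real n * r" using x(1) by simp
    ultimately show "jumping_number a c s (real n * r)" unfolding JI using x(3) by blast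
  qed
  have P5a: "\<forall>i<s. c i \<noteq> 0 \<longrightarrow> submonoid_of (S_set a c s i) (gen_monoid (a i))"
  proof (intro allI impI)
    fix i assume i: "i < s" "c i \<noteq> 0"
    have sub: "S_set a c s i \<subseteq> gen_monoid (a i)"
    proof
      fix y assume "y \<in> S_set a c s i"
      then obtain r x where y: "y = r * c i" "x \<in> lat" "a i \<bullet> x = r * c i" unfolding S_set_def by blast
      have h: "real (nat \<lfloor>x $ j\<rfloor>) = x $ j" for j
      proof -
        have "x $ j \<in> \<nat>" using y(2) unfolding lat_def by blast
        then obtain m where "x $ j = real m" by (auto elim!: Nats_cases)
        then show ?thesis by simp
      qed
      have "y = (\<Sum>j\<in>UNIV. a i $ j * x $ j)" using y(1,3) unfolding inner_vec_def by simp
      also have "\<dots> = (\<Sum>j\<in>UNIV. real (nat \<lfloor>x $ j\<rfloor>) * a i $ j)"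
        by (rule sum.cong) (simp_all add: h mult.commute)
      finally have "y = (\<Sum>j\<in>UNIV. real (nat \<lfloor>x $ j\<rfloor>) * a i $ j)" .
      then show "y \<in> gen_monoid (a i)" unfolding gen_monoid_def
        by (intro CollectI exI[of _ "\<lambda>j. nat \<lfloor>x $ j\<rfloor>"]) simp
    qed
    have "0 = 0 * c i \<and> 0 \<le> (0::real) \<and> (0::real^'n) \<in> lat \<and> a i \<bullet> 0 = 0 * c i \<and>
        (\<forall>l<s. l \<noteq> i \<longrightarrow> 0 * c l \<le> a l \<bullet> 0)" by (simp add: lat_zero)
    then have zero: "0 \<in> S_set a c s i" unfolding S_set_def by blast
    have add: "\<forall>x\<in>S_set a c s i. \<forall>y\<in>S_set a c s i. x + y \<in> S_set a c s i"
    proof (intro ballI)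
      fix u v assume "u \<in> S_set a c s i" "v \<in> S_set a c s i"
      then obtain r1 x1 r2 x2 where A: "u = r1 * c i" "r1 \<ge> 0" "x1 \<in> lat" "a i \<bullet> x1 = r1 * c i"
        "\<forall>l<s. l \<noteq> i \<longrightarrow> r1 * c l \<le> a l \<bullet> x1"
        and B: "v = r2 * c i" "r2 \<ge> 0" "x2 \<in> lat" "a i \<bullet> x2 = r2 * c i"
        "\<forall>l<s. l \<noteq> i \<longrightarrow> r2 * c l \<le> a l \<bullet> x2" unfolding S_set_def by blast
      have "\<forall>l<s. l \<noteq> i \<longrightarrow> (r1 + r2) * c l \<le> a l \<bullet> (x1 + x2)"
      proof (intro allI impI)
        fix l assume l: "l < s" "l \<noteq> i"
        have "r1 * c l + r2 * c l \<le> a l \<bullet> x1 + a l \<bullet> x2" using A(5) B(5) l by (intro add_mono) auto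
        then show "(r1 + r2) * c l \<le> a l \<bullet> (x1 + x2)" by (simp add: inner_add_right distrib_right)
      qed
      moreover have "a i \<bullet> (x1 + x2) = (r1 + r2) * c i" using A(4) B(4) by (simp add: inner_add_right distrib_right)
      moreover have "u + v = (r1 + r2) * c i" using A(1) B(1) by (simp add: distrib_right)
      moreover have "r1 + r2 \<ge> 0" using A(2) B(2) by simp
      moreover have "x1 + x2 \<in> lat" using lat_add[OF A(3) B(3)] .
      ultimately show "u + v \<in> S_set a c s i" unfolding S_set_def by blast
    qed
    show "submonoid_of (S_set a c s i) (gen_monoid (a i))"
      unfolding submonoid_of_def using sub zero add by auto
  qed
  have P5b: "{r. jumping_number a c s r} =
        (\<Union>i\<in>{i. i < s \<and> c i \<noteq> 0}. (\<lambda>y. y / c i) ` S_set a c s i)"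
  proof (intro set_eqI iffI)
    fix r assume "r \<in> {r. jumping_number a c s r}"
    then obtain x i where x: "r \<ge> 0" "x \<in> lat" "i \<in> PP c s" "a i \<bullet> x = r * c i"
      "\<forall>l<s. r * c l \<le> a l \<bullet> x" unfolding JI by auto
    have i: "i < s" "c i \<noteq> 0" using x PPd by auto
    have "r * c i \<in> S_set a c s i" unfolding S_set_def using x by blast
    moreover have "r = (r * c i) / c i" using i by simp
    ultimately show "r \<in> (\<Union>i\<in>{i. i < s \<and> c i \<noteq> 0}. (\<lambda>y. y / c i) ` S_set a c s i)"
      using i by blast
  next
    fix r assume "r \<in> (\<Union>i\<in>{i. i < s \<and> c i \<noteq> 0}. (\<lambda>y. y / c i) ` S_set a c s i)"
    then obtain i y where i: "i < s" "c i \<noteq> 0" and y: "y \<in> S_set a c s i" and r: "r = y / c i" by auto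
    then obtain r0 x where A: "y = r0 * c i" "r0 \<ge> 0" "x \<in> lat" "a i \<bullet> x = r0 * c i"
        "\<forall>l<s. l \<noteq> i \<longrightarrow> r0 * c l \<le> a l \<bullet> x" unfolding S_set_def by auto
    have rr: "r = r0" using r A i by simp
    have "\<forall>l<s. r0 * c l \<le> a l \<bullet> x"
    proof (intro allI impI)
      fix l assume "l < s" then show "r0 * c l \<le> a l \<bullet> x" using A(4,5) by (cases "l = i") auto
    qed
    then show "r \<in> {r. jumping_number a c s r}" unfolding JI rr using A i PPd by auto
  qed
  note mmge = mm_ge[OF a_nat c_nat PPne]
  note mmJ = mm_J[OF a_nat c_nat PPne]
  note tmm = tNP_iff_mm[OF a_nat c_nat PPne]
  note rpe = rp_eq[OF a_nat c_nat]
  note cnn = c_nonneg[OF a_nat c_nat]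
  note PPpos = PP_pos[OF a_nat c_nat]
  have P2: "\<forall>r\<ge>0. \<exists>r'. r' \<in> \<rat> \<and> real_pow a c s r = real_pow a c s r' \<and> jumping_number a c s r'"
  proof (intro allI impI)
    fix r :: real assume r0: "r \<ge> 0"
    define C where "C = (\<Prod>i\<in>PP c s. c i)"
    have finPP: "finite (PP c s)" using PPd by simp
    have Cpos: "C > 0" unfolding C_def using PPpos by (intro prod_pos) auto
    have CN: "C \<in> \<nat>" unfolding C_def using c_nat PPd by (intro prod_Nats) auto
    have Jnat: "\<exists>m::nat. t * C = real m" if Jt: "jumping_number a c s t" for t
    proof -
      obtain x i where x: "x \<in> lat" "i \<in> PP c s" "a i \<bullet> x = t * c i" using Jt unfolding JI by auto
      have "C = c i * (\<Prod>l\<in>PP c s - {i}. c l)" unfolding C_def using finPP x(2) by (rule prod.remove)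
      then have "t * C = (a i \<bullet> x) * (\<Prod>l\<in>PP c s - {i}. c l)" using x(3) by (simp add: mult.assoc)
      moreover have "a i \<bullet> x \<in> \<nat>" using inner_lat_Nats[of "a i" x] a_nat x PPd by auto
      moreover have "(\<Prod>l\<in>PP c s - {i}. c l) \<in> \<nat>" using c_nat PPd by (intro prod_Nats) auto
      ultimately have "t * C \<in> \<nat>" by simp
      then show ?thesis by (auto elim!: Nats_cases)
    qed
    obtain x0 where x0: "x0 \<in> E" using nonzero by auto
    have x0l: "x0 \<in> lat" using x0 Elat by auto
    have x0N: "\<forall>i<s. c i \<le> a i \<bullet> x0" using x0 ENP NPmem by auto
    define y where "y = real (nat \<lceil>r\<rceil>) *\<^sub>R x0"
    have yl: "y \<in> lat" unfolding y_def using lat_scale[OF x0l] .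
    have "\<forall>i<s. r * c i \<le> a i \<bullet> y"
    proof (intro allI impI)
      fix i assume i: "i < s"
      have "r * c i \<le> real (nat \<lceil>r\<rceil>) * c i" using cnn[OF i] by (intro mult_right_mono) (auto, linarith)
      also have "\<dots> \<le> real (nat \<lceil>r\<rceil>) * (a i \<bullet> x0)" using x0N i by (intro mult_left_mono) auto
      finally show "r * c i \<le> a i \<bullet> y" unfolding y_def by simp
    qed
    then have "r \<le> mm a c s y" using tmm[OF yl] tNP_lat[OF a_nat c_nat yl] by auto
    define N where "N = {n::nat. jumping_number a c s (real n / C) \<and> r \<le> real n / C}"
    obtain n1 where n1: "mm a c s y * C = real n1" using Jnat mmJ[OF yl] by blast
    have "real n1 / C = mm a c s y" using n1 Cpos by (simp add: field_simps)
    then have "n1 \<in> N" unfolding N_def using mmJ[OF yl] \<open>r \<le> mm a c s y\<close> by simp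
    define n0 where "n0 = (LEAST n. n \<in> N)"
    have n0N: "n0 \<in> N" unfolding n0_def using \<open>n1 \<in> N\<close> by (rule LeastI)
    have n0min: "\<And>m. m \<in> N \<Longrightarrow> n0 \<le> m" unfolding n0_def by (rule Least_le)
    define r' where "r' = real n0 / C"
    have J': "jumping_number a c s r'" and rr': "r \<le> r'" using n0N unfolding N_def r'_def by auto
    have Q': "r' \<in> \<rat>" unfolding r'_def using CN Nats_subset_Rats by (intro Rats_divide) auto
    have "\<forall>x::real^'n\<in>lat. r \<le> mm a c s x \<longleftrightarrow> r' \<le> mm a c s x"
    proof
      fix x :: "real^'n" assume xl: "x \<in> lat"
      show "r \<le> mm a c s x \<longleftrightarrow> r' \<le> mm a c s x"
      proof
        assume h: "r \<le> mm a c s x"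
        obtain m where m: "mm a c s x * C = real m" using Jnat mmJ[OF xl] by blast
        have mx: "real m / C = mm a c s x" using m Cpos by (simp add: field_simps)
        then have "m \<in> N" unfolding N_def using mmJ[OF xl] h by simp
        then have "n0 \<le> m" by (rule n0min)
        then have "real n0 / C \<le> real m / C" using Cpos by (simp add: divide_right_mono)
        then show "r' \<le> mm a c s x" unfolding r'_def using mx by simp
      next
        assume "r' \<le> mm a c s x" then show "r \<le> mm a c s x" using rr' by simp
      qed
    qed
    then have "real_pow a c s r = real_pow a c s r'" unfolding rpe using tmm by blast
    then show "\<exists>r'. r' \<in> \<rat> \<and> real_pow a c s r = real_pow a c s r' \<and> jumping_number a c s r'"
      using Q' J' by blast
  qed
  note mmin = mm_in[OF a_nat c_nat PPne]
  have P4: "\<forall>v. v extreme_point_of NP E \<longrightarrow>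
          (\<forall>n::nat. jumping_number a c s (real n / real (vgcd v)))"
  proof (intro allI impI)
    fix v :: "real^'n" and n :: nat
    assume ext: "v extreme_point_of NP E"
    have vE: "v \<in> E" using ext unfolding NP_def by (rule extreme_point_of_convex_hull)
    have vl: "v \<in> lat" using vE Elat by auto
    have v0: "v \<noteq> 0" using vE proper by auto
    have vNP: "v \<in> NP E" using vE ENP by auto
    have vnn: "\<And>j. 0 \<le> v $ j" using lat_nonneg[OF vl] .
    have vc: "\<forall>i<s. c i \<le> a i \<bullet> v" using vNP NPmem by auto
    define \<mu> where "\<mu> = mm a c s v"
    have mu_ge: "\<forall>i\<in>PP c s. \<mu> * c i \<le> a i \<bullet> v" unfolding \<mu>_def using mmge by blast
    have mu1: "1 \<le> \<mu>" unfolding \<mu>_def using mmge vc PPd by auto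
    have "\<mu> = 1"
    proof (rule ccontr)
      assume ne1: "\<mu> \<noteq> 1"
      then have mu1': "1 < \<mu>" using mu1 by simp
      define p where "p = (1 / \<mu>) *\<^sub>R v"
      define q where "q = (2 - 1 / \<mu>) *\<^sub>R v"
      have inv: "0 < 1 / \<mu>" "1 / \<mu> < 1" using mu1' by auto
      have memb: "k *\<^sub>R v \<in> NP E" if k0: "0 \<le> k" and kc: "\<forall>i\<in>PP c s. c i \<le> k * (a i \<bullet> v)" for k
      proof -
        have nn: "\<forall>j. 0 \<le> (k *\<^sub>R v) $ j" using k0 vnn by simp
        have "\<forall>i<s. c i \<le> a i \<bullet> (k *\<^sub>R v)"
        proof (intro allI impI)
          fix i assume i: "i < s"
          show "c i \<le> a i \<bullet> (k *\<^sub>R v)"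
          proof (cases "c i = 0")
            case True
            then show ?thesis using inner_nonneg_lat[of "a i" "k *\<^sub>R v"] a_nat i nn by auto
          next
            case False
            then show ?thesis using kc i PPd by auto
          qed
        qed
        then show ?thesis using NPmem nn by blast
      qed
      have pN: "p \<in> NP E" unfolding p_def
      proof (rule memb)
        show "0 \<le> 1 / \<mu>" using inv by simp
        show "\<forall>i\<in>PP c s. c i \<le> 1 / \<mu> * (a i \<bullet> v)"
        proof
          fix i assume "i \<in> PP c s"
          then have "\<mu> * c i \<le> a i \<bullet> v" using mu_ge by auto
          then show "c i \<le> 1 / \<mu> * (a i \<bullet> v)" using mu1' by (simp add: field_simps)
        qed
      qed
      have qN: "q \<in> NP E" unfolding q_def
      proof (rule memb)
        show "0 \<le> 2 - 1 / \<mu>" using inv by linarith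
        show "\<forall>i\<in>PP c s. c i \<le> (2 - 1 / \<mu>) * (a i \<bullet> v)"
        proof
          fix i assume i: "i \<in> PP c s"
          then have h: "\<mu> * c i \<le> a i \<bullet> v" using mu_ge by auto
          have ci: "0 < c i" using PPpos i by auto
          have "c i \<le> (2 * \<mu> - 1) * c i" using mu1' ci by simp
          also have "\<dots> = (2 - 1 / \<mu>) * (\<mu> * c i)" using mu1' by (simp add: field_simps)
          also have "\<dots> \<le> (2 - 1 / \<mu>) * (a i \<bullet> v)" using h inv by (intro mult_left_mono) linarith+
          finally show "c i \<le> (2 - 1 / \<mu>) * (a i \<bullet> v)" .
        qed
      qed
      have mid: "midpoint p q = v" unfolding midpoint_def p_def q_def
        by (simp add: scaleR_add_left[symmetric])
      have "p \<noteq> q"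
      proof
        assume "p = q"
        then have "(1 / \<mu>) *\<^sub>R v = (2 - 1 / \<mu>) *\<^sub>R v" unfolding p_def q_def .
        then have "1 / \<mu> = 2 - 1 / \<mu>" using v0 by (simp add: scaleR_cancel_right)
        then have "1 / \<mu> = 1" by linarith
        then show False using ne1 mu1 by (simp add: field_simps)
      qed
      then have "v \<in> open_segment p q" using mid midpoint_in_open_segment by metis
      then show False using ext pN qN unfolding extreme_point_of_def by blast
    qed
    then obtain i where i: "i \<in> PP c s" "a i \<bullet> v = c i" using mmin[of v] unfolding \<mu>_def by auto
    define g where "g = vgcd v"
    have gd: "\<And>j. g dvd nat \<lfloor>v $ j\<rfloor>" unfolding g_def vgcd_def by (rule Gcd_dvd) simp
    have g0: "g \<noteq> 0"
    proof
      assume "g = 0"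
      then have "\<And>j. nat \<lfloor>v $ j\<rfloor> = 0" using gd by simp
      then have "\<And>j. v $ j = 0" using lat_nat_floor[OF vl] by (metis of_nat_0)
      then show False using v0 by (simp add: vec_eq_iff)
    qed
    define w where "w = (1 / real g) *\<^sub>R v"
    have wl: "w \<in> lat" unfolding lat_def
    proof (intro CollectI allI)
      fix j
      obtain q where q: "nat \<lfloor>v $ j\<rfloor> = g * q" using gd[of j] by (auto elim: dvdE)
      have "w $ j = real (nat \<lfloor>v $ j\<rfloor>) / real g" unfolding w_def using lat_nat_floor[OF vl] by simp
      also have "\<dots> = real q" using q g0 by simp
      finally show "w $ j \<in> \<nat>" by simp
    qed
    define x where "x = real n *\<^sub>R w"
    have xl: "x \<in> lat" unfolding x_def using lat_scale[OF wl] .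
    have ax: "\<And>l. a l \<bullet> x = (real n / real g) * (a l \<bullet> v)" unfolding x_def w_def by simp
    have "\<forall>l<s. (real n / real g) * c l \<le> a l \<bullet> x"
    proof (intro allI impI)
      fix l assume "l < s"
      then have "c l \<le> a l \<bullet> v" using vc by auto
      then have "(real n / real g) * c l \<le> (real n / real g) * (a l \<bullet> v)"
        by (intro mult_left_mono) auto
      then show "(real n / real g) * c l \<le> a l \<bullet> x" using ax by simp
    qed
    moreover have "a i \<bullet> x = (real n / real g) * c i" using ax i by simp
    moreover have "0 \<le> real n / real g" by simp
    ultimately show "jumping_number a c s (real n / real (vgcd v))"
      unfolding JI g_def[symmetric] using xl i(1) by blast
  qed
  show ?thesis using P1 P2 P3 P4 P5a P5b by blast
qed

end
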